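(* If $A\subseteq\mathbb N_0\times\mathbb S$ is a Schnorr test for a computable forecasting system $\varphi$, then $n\mapsto\overline P_\varphi([A_n])$ is a computable sequence of real numbers.
   Context: $\mathbb N_0=\{0,1,\dots\}$; $\Omega=\{0,1\}^{\mathbb N}$; $\mathbb S$ finite binary strings, $|s|$ length, $\omega^n$ first $n$ entries of $\omega$; $[s]=\{\omega:\omega^{|s|}=s\}$, $[A]=\bigcup_{s\in A}[s]$. For $A\subseteq\mathbb N_0\times\mathbb S$: $A_n=\{s:(n,s)\in A\}$, $A_n^{<\ell}=\{s\in A_n:|s|<\ell\}$. $\mathcal I$: nonempty closed subintervals of $[0,1]$; $\overline E_I(f)=\max_{p\in I}[pf(1)+(1-p)f(0)]$. Forecasting system $\varphi:\mathbb S\to\mathcal I$, $\underline\varphi=\min\varphi$, $\overline\varphi=\max\varphi$. Supermartingale: $M:\mathbb S\to\mathbb R$ with $\overline E_{\varphi(s)}(M(s\,\cdot))\le M(s)$ for all $s$. $\overline P_\varphi(G)=\inf\{M(\square):M\text{ supermartingale for }\varphi,\ \liminf_nM(\omega^n)\ge\mathbb 1_G(\omega)\ \forall\omega\}$. A real map $r$ on an encoded countable set is computable if there is a recursive rational $q$ with $|r(d)-q(d,N)|\le2^{-N}$; $\varphi$ is computable if $\underline\varphi,\overline\varphi$ are computable. A Schnorr test for $\varphi$ is a recursive $A\subseteq\mathbb N_0\times\mathbb S$ with $\overline P_\varphi([A_n])\le2^{-n}$ for all $n$, and a recursive $e:\mathbb N_0^2\to\mathbb N_0$ with $\overline P_\varphi([A_n]\setminus[A_n^{<\ell}])\le2^{-N}$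 for all $(N,n)$ and $\ell\ge e(N,n)$. *)

theory Defs
  imports "HOL-Analysis.Analysis" "HOL-Library.Nat_Bijection"
begin

text \<open>Finite binary strings are \<open>bool list\<close> (True = 1, False = 0);
  infinite outcome sequences are \<open>nat \<Rightarrow> bool\<close> (index 0 is the first entry).\<close>

definition prefix_of :: "(nat \<Rightarrow> bool) \<Rightarrow> nat \<Rightarrow> bool list" where
  "prefix_of \<omega> n = map \<omega> [0..<n]"

definition cyl :: "bool list \<Rightarrow> (nat \<Rightarrow> bool) set" where
  "cyl s = {\<omega>. prefix_of \<omega> (length s) = s}"

definition cyl_set :: "bool list set \<Rightarrow> (nat \<Rightarrow> bool) set" where
  "cyl_set S = (\<Union>s\<in>S. cyl s)"

definition section_of :: "(nat \<times> bool list) set \<Rightarrow> nat \<Rightarrow> bool list set" where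
  "section_of A n = {s. (n, s) \<in> A}"

definition section_lt :: "(nat \<times> bool list) set \<Rightarrow> nat \<Rightarrow> nat \<Rightarrow> bool list set" where
  "section_lt A n l = {s \<in> section_of A n. length s < l}"

definition forecasting_system :: "(bool list \<Rightarrow> real set) \<Rightarrow> bool" where
  "forecasting_system \<phi> \<longleftrightarrow> (\<forall>s. \<exists>a b. 0 \<le> a \<and> a \<le> b \<and> b \<le> 1 \<and> \<phi> s = {a..b})"

definition lower_fs :: "(bool list \<Rightarrow> real set) \<Rightarrow> bool list \<Rightarrow> real" where
  "lower_fs \<phi> s = Inf (\<phi> s)"

definition upper_fs :: "(bool list \<Rightarrow> real set) \<Rightarrow> bool list \<Rightarrow> real" where
  "upper_fs \<phi> s = Sup (\<phi> s)"

definition upper_exp :: "real set \<Rightarrow> (bool \<Rightarrow> real) \<Rightarrow> real" where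
  "upper_exp I f = Sup ((\<lambda>p. p * f True + (1 - p) * f False) ` I)"

definition supermartingale :: "(bool list \<Rightarrow> real set) \<Rightarrow> (bool list \<Rightarrow> real) \<Rightarrow> bool" where
  "supermartingale \<phi> M \<longleftrightarrow> (\<forall>s. upper_exp (\<phi> s) (\<lambda>x. M (s @ [x])) \<le> M s)"

definition upper_prob :: "(bool list \<Rightarrow> real set) \<Rightarrow> (nat \<Rightarrow> bool) set \<Rightarrow> real" where
  "upper_prob \<phi> G = Inf {M [] | M. supermartingale \<phi> M \<and>
      (\<forall>\<omega>. liminf (\<lambda>n. ereal (M (prefix_of \<omega> n))) \<ge> ereal (indicator G \<omega>))}"

datatype recf = Zero | Succ | Proj nat | Comp recf "recf list" | Prim recf recf | Mn recf

inductive rec_eval :: "recf \<Rightarrow> nat list \<Rightarrow> nat \<Rightarrow> bool" where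
  zero: "rec_eval Zero xs 0"
| succ: "rec_eval Succ (x # xs) (Suc x)"
| proj: "i < length xs \<Longrightarrow> rec_eval (Proj i) xs (xs ! i)"
| comp: "list_all2 (\<lambda>g y. rec_eval g xs y) gs ys \<Longrightarrow> rec_eval f ys z \<Longrightarrow> rec_eval (Comp f gs) xs z"
| prim0: "rec_eval f xs y \<Longrightarrow> rec_eval (Prim f g) (0 # xs) y"
| primS: "rec_eval (Prim f g) (n # xs) y \<Longrightarrow> rec_eval g (y # n # xs) z
          \<Longrightarrow> rec_eval (Prim f g) (Suc n # xs) z"
| mn: "rec_eval f (n # xs) 0 \<Longrightarrow> (\<forall>m<n. \<exists>y. rec_eval f (m # xs) (Suc y))
          \<Longrightarrow> rec_eval (Mn f) xs n"

text \<open>A total function \<open>nat \<Rightarrow> nat\<close> is recursive if some mu-recursive code computes it.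
  Several arguments are encoded with the Cantor pairing \<open>prod_encode\<close>.\<close>
definition recursive1 :: "(nat \<Rightarrow> nat) \<Rightarrow> bool" where
  "recursive1 f \<longleftrightarrow> (\<exists>c. \<forall>x. rec_eval c [x] (f x))"

definition enc_str :: "bool list \<Rightarrow> nat" where
  "enc_str s = list_encode (map of_bool s)"

definition recursive_set :: "(nat \<times> bool list) set \<Rightarrow> bool" where
  "recursive_set A \<longleftrightarrow> (\<exists>f. recursive1 f \<and>
     (\<forall>n s. f (prod_encode (n, enc_str s)) = (if (n, s) \<in> A then 1 else 0)))"

definition recursive2 :: "(nat \<Rightarrow> nat \<Rightarrow> nat) \<Rightarrow> bool" where
  "recursive2 e \<longleftrightarrow> (\<exists>f. recursive1 f \<and> (\<forall>x y. e x y = f (prod_encode (x, y))))"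

definition recursive_rat :: "(nat \<Rightarrow> rat) \<Rightarrow> bool" where
  "recursive_rat q \<longleftrightarrow> (\<exists>a b c. recursive1 a \<and> recursive1 b \<and> recursive1 c \<and>
     (\<forall>x. q x = (of_nat (a x) - of_nat (b x)) / of_nat (c x + 1)))"

definition computable_real :: "('d \<Rightarrow> nat) \<Rightarrow> ('d \<Rightarrow> real) \<Rightarrow> bool" where
  "computable_real enc r \<longleftrightarrow> (\<exists>q. recursive_rat q \<and>
     (\<forall>d N. \<bar>r d - real_of_rat (q (prod_encode (enc d, N)))\<bar> \<le> (1/2) ^ N))"

definition computable_fs :: "(bool list \<Rightarrow> real set) \<Rightarrow> bool" where
  "computable_fs \<phi> \<longleftrightarrow> computable_real enc_str (lower_fs \<phi>) \<and> computable_real enc_str (upper_fs \<phi>)"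

definition schnorr_test :: "(bool list \<Rightarrow> real set) \<Rightarrow> (nat \<times> bool list) set \<Rightarrow> bool" where
  "schnorr_test \<phi> A \<longleftrightarrow> recursive_set A \<and>
     (\<forall>n. upper_prob \<phi> (cyl_set (section_of A n)) \<le> (1/2) ^ n) \<and>
     (\<exists>e. recursive2 e \<and> (\<forall>N n l. l \<ge> e N n \<longrightarrow>
        upper_prob \<phi> (cyl_set (section_of A n) - cyl_set (section_lt A n l)) \<le> (1/2) ^ N))"

end

theory Submission
  imports Defs
begin

abbreviation "pe a b \<equiv> prod_encode (a, b)"
definition p1 :: "nat \<Rightarrow> nat" where "p1 z = fst (prod_decode z)"
definition p2 :: "nat \<Rightarrow> nat" where "p2 z = snd (prod_decode z)"
lemma p12_pe[simp]: "p1 (pe a b) = a" "p2 (pe a b) = b" by (simp_all add: p1_def p2_def)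

abbreviation "rc1 \<equiv> recursive1"

lemma proj'[intro]: "i < length xs \<Longrightarrow> y = xs ! i \<Longrightarrow> rec_eval (Proj i) xs y"
  using rec_eval.proj by blast
lemma zero'[intro]: "rec_eval Zero xs 0" by (rule rec_eval.zero)
lemma succ'[intro]: "y = Suc x \<Longrightarrow> rec_eval Succ (x # xs) y" using rec_eval.succ by blast
lemma comp1[intro]: "rec_eval g xs y \<Longrightarrow> rec_eval f [y] z \<Longrightarrow> rec_eval (Comp f [g]) xs z"
  by (rule rec_eval.comp[where ys="[y]"]) auto
lemma comp2[intro]: "rec_eval g xs y \<Longrightarrow> rec_eval h xs u \<Longrightarrow> rec_eval f [y,u] z \<Longrightarrow> rec_eval (Comp f [g,h]) xs z"
  by (rule rec_eval.comp[where ys="[y,u]"]) auto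
lemma prim0'[intro]: "rec_eval f xs y \<Longrightarrow> rec_eval (Prim f g) (0 # xs) y" by (rule rec_eval.prim0)

definition "cadd = Prim (Proj 0) (Comp Succ [Proj 0])"
lemma cadd: "rec_eval cadd [n, m] (n + m)"
proof (induction n)
  case 0 thus ?case unfolding cadd_def by (auto intro!: rec_eval.intros proj')
next
  case (Suc n)
  show ?case unfolding cadd_def
    by (rule rec_eval.primS[OF Suc[unfolded cadd_def]]) (auto intro!: rec_eval.intros proj')
qed

lemma cadd'[intro]: "y = n + m \<Longrightarrow> rec_eval cadd [n, m] y" using cadd by simp

definition "cmul = Prim Zero (Comp cadd [Proj 0, Proj 2])"
lemma cmul: "rec_eval cmul [n, m] (n * m)"
proof (induction n)
  case 0 thus ?case unfolding cmul_def by (auto intro!: rec_eval.intros proj')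
next
  case (Suc n)
  have "rec_eval (Comp cadd [Proj 0, Proj 2]) [n*m, n, m] (n * m + m)"
    by (rule rec_eval.comp[where ys="[n*m, m]"]) (auto intro!: rec_eval.intros proj' cadd)
  thus ?case unfolding cmul_def
    by (intro rec_eval.primS[OF Suc[unfolded cmul_def]]) (simp add: add.commute)
qed

definition "cpred = Prim Zero (Proj 1)"
lemma cpred: "rec_eval cpred [n] (n - 1)"
proof (induction n)
  case 0 thus ?case unfolding cpred_def by (auto intro!: rec_eval.intros)
next
  case (Suc n)
  show ?case unfolding cpred_def
    by (rule rec_eval.primS[OF Suc[unfolded cpred_def]]) auto
qed

lemma cpred'[intro]: "y = n - 1 \<Longrightarrow> rec_eval cpred [n] y" using cpred by simp

definition "csub = Prim (Proj 0) (Comp cpred [Proj 0])"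
lemma csub: "rec_eval csub [n, m] (m - n)"
proof (induction n)
  case 0 thus ?case unfolding csub_def by (auto intro!: rec_eval.intros proj')
next
  case (Suc n)
  have "rec_eval (Comp cpred [Proj 0]) [m - n, n, m] (m - n - 1)"
    by (rule rec_eval.comp[where ys="[m - n]"]) (auto intro!: rec_eval.intros proj' cpred)
  thus ?case unfolding csub_def
    by (intro rec_eval.primS[OF Suc[unfolded csub_def]]) simp
qed

definition "cif = Prim (Proj 0) (Proj 3)"
lemma cif: "rec_eval cif [c, a, b] (if c = 0 then a else b)"
proof (induction c)
  case 0 thus ?case unfolding cif_def by (auto intro!: rec_eval.intros)
next
  case (Suc c)
  show ?case unfolding cif_def
    by (rule rec_eval.primS[OF Suc[unfolded cif_def]]) auto
qed

definition "ctri = Prim Zero (Comp cadd [Proj 0, Comp Succ [Proj 1]])"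
lemma ctri: "rec_eval ctri [n] (triangle n)"
proof (induction n)
  case 0 thus ?case unfolding ctri_def by (auto intro!: rec_eval.intros proj')
next
  case (Suc n)
  have "rec_eval (Comp cadd [Proj 0, Comp Succ [Proj 1]]) [triangle n, n] (triangle n + Suc n)"
    by (rule rec_eval.comp[where ys="[triangle n, Suc n]"])
       (auto intro!: rec_eval.intros proj' cadd rec_eval.comp[where ys="[n]"])
  thus ?case unfolding ctri_def
    by (intro rec_eval.primS[OF Suc[unfolded ctri_def]]) simp
qed

lemma rc1_const[intro]: "rc1 (\<lambda>x. k)"
proof -
  have "\<exists>c. \<forall>xs. rec_eval c xs k"
  proof (induction k)
    case 0 thus ?case by (auto intro: rec_eval.intros)
  next
    case (Suc k)
    then obtain c where c: "\<And>xs. rec_eval c xs k" by blast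
    have "rec_eval (Comp Succ [c]) xs (Suc k)" for xs
      by (rule rec_eval.comp[where ys="[k]"]) (auto intro: c rec_eval.intros)
    thus ?case by blast
  qed
  thus ?thesis unfolding recursive1_def by blast
qed

lemma rc1_id[intro]: "rc1 (\<lambda>x. x)"
  unfolding recursive1_def by (rule exI[of _ "Proj 0"]) (auto intro: rec_eval.proj[where xs="[_]", simplified])

lemma rc1_comp: "rc1 f \<Longrightarrow> rc1 g \<Longrightarrow> rc1 (\<lambda>x. f (g x))"
  unfolding recursive1_def
proof (elim exE)
  fix cf cg assume f: "\<forall>x. rec_eval cf [x] (f x)" and g: "\<forall>x. rec_eval cg [x] (g x)"
  have "rec_eval (Comp cf [cg]) [x] (f (g x))" for x
    by (rule rec_eval.comp[where ys="[g x]"]) (use f g in auto)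
  thus "\<exists>c. \<forall>x. rec_eval c [x] (f (g x))" by blast
qed

lemma rc1_bin:
  assumes op: "\<And>a b. rec_eval c [a, b] (h a b)" and "rc1 F" "rc1 G"
  shows "rc1 (\<lambda>x. h (F x) (G x))"
proof -
  from assms(2,3) obtain cF cG where F: "\<forall>x. rec_eval cF [x] (F x)" and G: "\<forall>x. rec_eval cG [x] (G x)"
    unfolding recursive1_def by blast
  have "rec_eval (Comp c [cF, cG]) [x] (h (F x) (G x))" for x
    by (rule rec_eval.comp[where ys="[F x, G x]"]) (use F G op in auto)
  thus ?thesis unfolding recursive1_def by blast
qed

lemma rc1_add[intro]: "rc1 F \<Longrightarrow> rc1 G \<Longrightarrow> rc1 (\<lambda>x. F x + G x)"
  by (rule rc1_bin[OF cadd])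
lemma rc1_mult[intro]: "rc1 F \<Longrightarrow> rc1 G \<Longrightarrow> rc1 (\<lambda>x. F x * G x)"
  by (rule rc1_bin[OF cmul])
lemma rc1_sub[intro]: "rc1 F \<Longrightarrow> rc1 G \<Longrightarrow> rc1 (\<lambda>x. F x - G x)"
  using rc1_bin[OF csub, of G F] by simp
lemma rc1_Suc[intro]: "rc1 F \<Longrightarrow> rc1 (\<lambda>x. Suc (F x))"
  using rc1_add[of F "\<lambda>_. 1"] by auto

lemma rc1_if[intro]:
  assumes "rc1 C" "rc1 F" "rc1 G"
  shows "rc1 (\<lambda>x. if C x = 0 then F x else G x)"
proof -
  from assms obtain cC cF cG where C: "\<forall>x. rec_eval cC [x] (C x)" and
    F: "\<forall>x. rec_eval cF [x] (F x)" and G: "\<forall>x. rec_eval cG [x] (G x)"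
    unfolding recursive1_def by blast
  have "rec_eval (Comp cif [cC, cF, cG]) [x] (if C x = 0 then F x else G x)" for x
    by (rule rec_eval.comp[where ys="[C x, F x, G x]"]) (use C F G cif in auto)
  thus ?thesis unfolding recursive1_def by blast
qed

lemma rc1_tri: "rc1 (\<lambda>x. triangle x)"
  unfolding recursive1_def using ctri by blast

lemma rc1_pe[intro]: "rc1 F \<Longrightarrow> rc1 G \<Longrightarrow> rc1 (\<lambda>x. pe (F x) (G x))"
  unfolding prod_encode_def by (auto intro!: rc1_comp[OF rc1_tri, of "\<lambda>x. F x + G x", simplified])


lemma csub'[intro]: "y = m - n \<Longrightarrow> rec_eval csub [n, m] y" using csub by simp
lemma ctri'[intro]: "y = triangle n \<Longrightarrow> rec_eval ctri [n] y" using ctri by simp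

definition "kdec x = (LEAST k. x < triangle (Suc k))"

lemma kdec: "x < triangle (Suc (kdec x))" "m < kdec x \<Longrightarrow> triangle (Suc m) \<le> x"
proof -
  have ex: "x < triangle (Suc x)" by (induction x) auto
  show "x < triangle (Suc (kdec x))" unfolding kdec_def by (rule LeastI[of _ x]) (rule ex)
  show "m < kdec x \<Longrightarrow> triangle (Suc m) \<le> x"
    unfolding kdec_def using not_less_Least by fastforce
qed

lemma kdec_tri: "triangle (kdec x) \<le> x"
proof (cases "kdec x")
  case (Suc m) thus ?thesis using kdec(2)[of m x] by simp
qed simp

lemma prod_decode_kdec: "prod_decode x = (x - triangle (kdec x), kdec x - (x - triangle (kdec x)))"
proof -
  have a: "x - triangle (kdec x) \<le> kdec x" using kdec(1)[of x] by simp
  have "prod_encode (x - triangle (kdec x), kdec x - (x - triangle (kdec x))) = x"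
    unfolding prod_encode_def using a kdec_tri[of x] by simp
  thus ?thesis by (metis prod_encode_inverse)
qed

lemma ckdec_aux: "rec_eval (Comp ctri [Comp Succ [Proj 0]]) [k, x] (triangle (Suc k))"
  "rec_eval (Comp Succ [Proj 1]) [k, x] (Suc x)"
  by (rule comp1[where y="Suc k"], rule comp1[where y=k], auto)
     (rule comp1[where y=x], auto)

definition "ckdec = Mn (Comp csub [Comp ctri [Comp Succ [Proj 0]], Comp Succ [Proj 1]])"
lemma ckdec: "rec_eval ckdec [x] (kdec x)"
  unfolding ckdec_def
proof (rule rec_eval.mn)
  show "rec_eval (Comp csub [Comp ctri [Comp Succ [Proj 0]], Comp Succ [Proj 1]]) [kdec x, x] 0"
    using kdec(1)[of x] by (intro comp2[OF ckdec_aux]) (rule csub', simp)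
  show "\<forall>m<kdec x. \<exists>y. rec_eval (Comp csub [Comp ctri [Comp Succ [Proj 0]], Comp Succ [Proj 1]]) [m, x] (Suc y)"
  proof (intro allI impI)
    fix m assume "m < kdec x"
    hence "triangle (Suc m) \<le> x" by (rule kdec(2))
    hence "Suc x - triangle (Suc m) = Suc (x - triangle (Suc m))" by simp
    thus "\<exists>y. rec_eval (Comp csub [Comp ctri [Comp Succ [Proj 0]], Comp Succ [Proj 1]]) [m, x] (Suc y)"
      by (intro exI comp2[OF ckdec_aux]) (rule csub', simp)
  qed
qed

lemma rc1_kdec: "rc1 kdec" unfolding recursive1_def using ckdec by blast

lemma rc1_p1'[intro]: "rc1 F \<Longrightarrow> rc1 (\<lambda>x. p1 (F x))"
proof -
  have "rc1 (\<lambda>x. x - triangle (kdec x))" by (intro rc1_sub rc1_id rc1_comp[OF rc1_tri] rc1_kdec)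
  hence "rc1 p1" unfolding p1_def prod_decode_kdec by simp
  thus "rc1 F \<Longrightarrow> rc1 (\<lambda>x. p1 (F x))" by (rule rc1_comp)
qed

lemma rc1_p2'[intro]: "rc1 F \<Longrightarrow> rc1 (\<lambda>x. p2 (F x))"
proof -
  have "rc1 (\<lambda>x. kdec x - (x - triangle (kdec x)))" by (intro rc1_sub rc1_id rc1_comp[OF rc1_tri] rc1_kdec)
  hence "rc1 p2" unfolding p2_def prod_decode_kdec by simp
  thus "rc1 F \<Longrightarrow> rc1 (\<lambda>x. p2 (F x))" by (rule rc1_comp)
qed

lemma citer: assumes "\<And>x. rec_eval c [x] (H x)"
  shows "rec_eval (Prim (Proj 0) (Comp c [Proj 0])) [n, v] ((H ^^ n) v)"
proof (induction n)
  case 0 thus ?case by (auto intro!: rec_eval.prim0)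
next
  case (Suc n)
  show ?case by (rule rec_eval.primS[OF Suc]) (rule comp1[where y="(H ^^ n) v"], auto intro: assms)
qed

lemma rc1_iter0: assumes "rc1 H" "rc1 N" "rc1 I" shows "rc1 (\<lambda>x. (H ^^ N x) (I x))"
proof -
  obtain c where "\<And>x. rec_eval c [x] (H x)" using assms(1) unfolding recursive1_def by blast
  hence "rec_eval (Prim (Proj 0) (Comp c [Proj 0])) [n, v] ((H ^^ n) v)" for n v by (rule citer)
  hence "rc1 (\<lambda>p. (H ^^ p1 p) (p2 p))" using rc1_bin[of _ "\<lambda>n v. (H ^^ n) v" p1 p2] rc1_p1' rc1_p2' rc1_id
    by blast
  from rc1_comp[OF this rc1_pe[OF assms(2,3)]] show ?thesis by simp
qed

lemma rc1_iter[intro]: assumes "rc1 (\<lambda>p. H (p1 p) (p2 p))" "rc1 N" "rc1 I"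
  shows "rc1 (\<lambda>x. (H x ^^ N x) (I x))"
proof -
  define H' where "H' z = pe (p1 z) (H (p1 z) (p2 z))" for z
  have "rc1 H'" unfolding H'_def using assms(1) by (intro rc1_pe rc1_p1' rc1_id)
  have it: "(H' ^^ k) (pe x v) = pe x ((H x ^^ k) v)" for k x v
    by (induction k) (auto simp: H'_def)
  have "rc1 (\<lambda>x. p2 ((H' ^^ N x) (pe x (I x))))"
    by (intro rc1_p2' rc1_iter0 \<open>rc1 H'\<close> assms rc1_pe rc1_id)
  thus ?thesis by (simp add: it)
qed



definition ue :: "real \<Rightarrow> real \<Rightarrow> (bool \<Rightarrow> real) \<Rightarrow> real" where
  "ue a b f = max (a * f True + (1-a) * f False) (b * f True + (1-b) * f False)"

lemma upper_exp_ival: assumes "a \<le> b" shows "upper_exp {a..b} f = ue a b f"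
proof -
  let ?g = "\<lambda>p. p * f True + (1-p) * f False"
  have le: "?g p \<le> ue a b f" if "p \<in> {a..b}" for p
  proof (cases "f False \<le> f True")
    case True
    have "?g p = f False + p * (f True - f False)" by (simp add: algebra_simps)
    also have "\<dots> \<le> f False + b*(f True - f False)" using that True
      by (intro add_left_mono mult_right_mono) auto
    also have "\<dots> = ?g b" by (simp add: algebra_simps)
    finally show ?thesis unfolding ue_def by simp
  next
    case False
    have "?g p = f False + p * (f True - f False)" by (simp add: algebra_simps)
    also have "\<dots> \<le> f False + a*(f True - f False)" using that False
      by (intro add_left_mono mult_right_mono_neg) auto
    also have "\<dots> = ?g a" by (simp add: algebra_simps)
    finally show ?thesis unfolding ue_def by simp
  qed
  have mem: "ue a b f \<in> ?g ` {a..b}" using assms unfolding ue_def max_def by auto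
  show ?thesis unfolding upper_exp_def by (rule cSup_eq_maximum[OF mem]) (use le in auto)
qed

lemma fs: assumes "forecasting_system \<phi>"
  shows "\<phi> s = {lower_fs \<phi> s .. upper_fs \<phi> s}" "0 \<le> lower_fs \<phi> s" "lower_fs \<phi> s \<le> upper_fs \<phi> s"
    "upper_fs \<phi> s \<le> 1"
proof -
  from assms obtain a b where ab: "0\<le>a" "a\<le>b" "b\<le>1" "\<phi> s = {a..b}"
    unfolding forecasting_system_def by blast
  hence "lower_fs \<phi> s = a" "upper_fs \<phi> s = b" unfolding lower_fs_def upper_fs_def by auto
  thus "\<phi> s = {lower_fs \<phi> s .. upper_fs \<phi> s}" "0 \<le> lower_fs \<phi> s" "lower_fs \<phi> s \<le> upper_fs \<phi> s"
    "upper_fs \<phi> s \<le> 1" using ab by auto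
qed

lemma UE: assumes "forecasting_system \<phi>"
  shows "upper_exp (\<phi> s) f = ue (lower_fs \<phi> s) (upper_fs \<phi> s) f"
  using fs[OF assms] upper_exp_ival by metis

lemma ue_const: "ue a b (\<lambda>_. c) = c" by (simp add: ue_def algebra_simps)

lemma ue_mono: assumes "0 \<le> a" "a \<le> b" "b \<le> 1" "\<And>x. f x \<le> g x" shows "ue a b f \<le> ue a b g"
proof -
  have "p * f True + (1-p) * f False \<le> p * g True + (1-p) * g False" if "0 \<le> p" "p \<le> 1" for p
    using that assms(4) by (intro add_mono mult_left_mono) auto
  thus ?thesis unfolding ue_def using assms by (intro max.mono) auto
qed

lemma ue_add: "ue a b (\<lambda>x. f x + g x) \<le> ue a b f + ue a b g"
  unfolding ue_def by (simp add: algebra_simps max_def)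

lemma ue_ge_min: assumes "0 \<le> a" "a \<le> 1" shows "min (f True) (f False) \<le> ue a b f"
proof -
  have "min (f True) (f False) = a * min (f True) (f False) + (1-a) * min (f True) (f False)"
    by (simp add: algebra_simps)
  also have "\<dots> \<le> a * f True + (1-a) * f False" using assms by (intro add_mono mult_left_mono) auto
  finally show ?thesis unfolding ue_def by simp
qed

lemma liminf_ev_le:
  fixes f :: "nat \<Rightarrow> real"
  assumes "\<And>n. n \<ge> m \<Longrightarrow> f n \<le> c" shows "liminf (\<lambda>n. ereal (f n)) \<le> ereal c"
proof -
  have "liminf (\<lambda>n. ereal (f n)) \<le> liminf (\<lambda>n. ereal c)"
    by (rule Liminf_mono) (use assms in \<open>auto simp: eventually_sequentially\<close>)
  thus ?thesis by (simp add: Liminf_const)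
qed

lemma liminf_ev_eq:
  fixes f :: "nat \<Rightarrow> real"
  assumes "\<And>n. n \<ge> m \<Longrightarrow> f n = c" shows "liminf (\<lambda>n. ereal (f n)) = ereal c"
proof -
  have "((\<lambda>n. ereal (f n)) \<longlongrightarrow> ereal c) sequentially"
    by (rule tendsto_eventually) (use assms in \<open>auto simp: eventually_sequentially\<close>)
  thus ?thesis by (intro lim_imp_Liminf) auto
qed

lemma sm_lower:
  assumes fsys: "forecasting_system \<phi>" and sm: "supermartingale \<phi> M"
    and lim: "\<And>\<omega>. prefix_of \<omega> (length s) = s \<Longrightarrow> liminf (\<lambda>n. ereal (M (prefix_of \<omega> n))) \<ge> ereal c"
  shows "M s \<ge> c"
proof (rule ccontr)
  assume nc: "\<not> c \<le> M s"
  define nx where "nx t = (if M (t @ [True]) \<le> M t then t @ [True] else t @ [False])" for t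
  have nx_le: "M (nx t) \<le> M t" for t
  proof -
    have "min (M (t@[True])) (M (t@[False])) \<le> ue (lower_fs \<phi> t) (upper_fs \<phi> t) (\<lambda>x. M (t @ [x]))"
      using fs[OF fsys, of t] by (intro ue_ge_min[where f="\<lambda>x. M (t @ [x])", simplified]) auto
    also have "\<dots> \<le> M t" using sm UE[OF fsys] unfolding supermartingale_def by metis
    finally show ?thesis unfolding nx_def by (auto simp: min_def split: if_splits)
  qed
  have nx_app: "\<exists>b. nx t = t @ [b]" for t unfolding nx_def by auto
  define q where "q k = (nx ^^ k) s" for k
  have qS: "q (Suc k) = nx (q k)" for k by (simp add: q_def)
  have qlen: "length (q k) = length s + k" for k
    by (induction k) (auto simp: q_def[of 0] qS dest!: meta_spec[of _ "q _"] nx_app[THEN exE] intro: nx_app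
       , metis length_append_singleton nx_app)
  have qpre: "\<exists>u. q (j + d) = q j @ u" for j d
  proof (induction d)
    case 0 thus ?case by simp
  next
    case (Suc d)
    then obtain u where u: "q (j + d) = q j @ u" by blast
    obtain b where "nx (q (j+d)) = q (j+d) @ [b]" using nx_app by blast
    thus ?case using u by (auto simp: qS)
  qed
  have qM: "M (q k) \<le> M s" for k
    by (induction k) (auto simp: q_def[of 0] qS intro: order.trans[OF nx_le])
  define \<omega> where "\<omega> i = q (Suc i) ! i" for i
  have nth_q: "i < length s + k \<Longrightarrow> q k ! i = \<omega> i" for i k
  proof -
    assume i: "i < length s + k"
    obtain u where u: "q (k + Suc i) = q k @ u" using qpre by blast
    obtain v where v: "q (Suc i + k) = q (Suc i) @ v" using qpre by blast
    have "q k ! i = q (k + Suc i) ! i" using u i qlen by (simp add: nth_append)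
    also have "\<dots> = q (Suc i) ! i" using v qlen by (simp add: nth_append add.commute)
    finally show ?thesis by (simp add: \<omega>_def)
  qed
  have pre: "prefix_of \<omega> (length s + k) = q k" for k
    unfolding prefix_of_def by (rule nth_equalityI) (auto simp: qlen nth_q)
  have "liminf (\<lambda>n. ereal (M (prefix_of \<omega> n))) \<le> ereal (M s)"
  proof (rule liminf_ev_le[where m="length s"])
    fix n assume "length s \<le> n"
    then obtain k where "n = length s + k" using le_Suc_ex by blast
    thus "M (prefix_of \<omega> n) \<le> M s" using pre qM by simp
  qed
  moreover have "prefix_of \<omega> (length s) = s" using pre[of 0] by (simp add: q_def)
  ultimately have "ereal c \<le> ereal (M s)" using lim order.trans by blast
  thus False using nc by simp
qed

definition "SMset \<phi> G = {M [] | M. supermartingale \<phi> M \<and>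
      (\<forall>\<omega>. liminf (\<lambda>n. ereal (M (prefix_of \<omega> n))) \<ge> ereal (indicator G \<omega>))}"

lemma up_def': "upper_prob \<phi> G = Inf (SMset \<phi> G)" unfolding upper_prob_def SMset_def ..

lemma SM_one: assumes "forecasting_system \<phi>" shows "1 \<in> SMset \<phi> G"
proof -
  have "supermartingale \<phi> (\<lambda>_. 1)" unfolding supermartingale_def UE[OF assms] ue_const by simp
  moreover have "liminf (\<lambda>n. ereal ((\<lambda>_. 1::real) (prefix_of \<omega> n))) \<ge> ereal (indicator G \<omega>)" for \<omega>
    by (simp add: Liminf_const indicator_def)
  ultimately show ?thesis unfolding SMset_def by (intro CollectI exI[of _ "\<lambda>_. 1"]) auto
qed

lemma SM_nonneg: assumes "forecasting_system \<phi>" "x \<in> SMset \<phi> G" shows "0 \<le> x"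
proof -
  obtain M where M: "x = M []" "supermartingale \<phi> M"
    "\<And>\<omega>. liminf (\<lambda>n. ereal (M (prefix_of \<omega> n))) \<ge> ereal (indicator G \<omega>)"
    using assms(2) unfolding SMset_def by blast
  have "0 \<le> M []"
  proof (rule sm_lower[OF assms(1) M(2)])
    fix \<omega> show "ereal 0 \<le> liminf (\<lambda>n. ereal (M (prefix_of \<omega> n)))"
      using M(3)[of \<omega>] by (rule order.trans[rotated]) (simp add: indicator_def)
  qed
  thus ?thesis using M by simp
qed

lemma up_le: assumes "forecasting_system \<phi>" "supermartingale \<phi> M"
  "\<And>\<omega>. liminf (\<lambda>n. ereal (M (prefix_of \<omega> n))) \<ge> ereal (indicator G \<omega>)"
  shows "upper_prob \<phi> G \<le> M []"
  unfolding up_def'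
proof (rule cInf_lower)
  show "M [] \<in> SMset \<phi> G" using assms unfolding SMset_def by blast
  show "bdd_below (SMset \<phi> G)" using SM_nonneg[OF assms(1)] by (auto intro: bdd_belowI[of _ 0])
qed

lemma up_ge: assumes "forecasting_system \<phi>" "\<And>M. supermartingale \<phi> M \<Longrightarrow>
   (\<And>\<omega>. liminf (\<lambda>n. ereal (M (prefix_of \<omega> n))) \<ge> ereal (indicator G \<omega>)) \<Longrightarrow> c \<le> M []"
  shows "c \<le> upper_prob \<phi> G"
  unfolding up_def'
proof (rule cInf_greatest)
  show "SMset \<phi> G \<noteq> {}" using SM_one[OF assms(1)] by blast
  show "\<And>x. x \<in> SMset \<phi> G \<Longrightarrow> c \<le> x" using assms(2) unfolding SMset_def by blast
qed

lemma up_nonneg: assumes "forecasting_system \<phi>" shows "0 \<le> upper_prob \<phi> G"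
  unfolding up_def' using SM_one[OF assms] SM_nonneg[OF assms] by (intro cInf_greatest) auto

lemma up_mono: assumes "forecasting_system \<phi>" "G \<subseteq> H" shows "upper_prob \<phi> G \<le> upper_prob \<phi> H"
proof (rule up_ge[OF assms(1)])
  fix M assume M: "supermartingale \<phi> M"
    "\<And>\<omega>. liminf (\<lambda>n. ereal (M (prefix_of \<omega> n))) \<ge> ereal (indicator H \<omega>)"
  show "upper_prob \<phi> G \<le> M []"
  proof (rule up_le[OF assms(1) M(1)])
    fix \<omega> show "ereal (indicator G \<omega>) \<le> liminf (\<lambda>n. ereal (M (prefix_of \<omega> n)))"
      by (rule order.trans[rotated, OF M(2)[of \<omega>]]) (use assms(2) in \<open>auto simp: indicator_def\<close>)
  qed
qed

lemma up_subadd: assumes fsys: "forecasting_system \<phi>" and sub: "G \<subseteq> G1 \<union> G2"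
  shows "upper_prob \<phi> G \<le> upper_prob \<phi> G1 + upper_prob \<phi> G2"
proof -
  have key: "upper_prob \<phi> G \<le> M1 [] + M2 []" if
    M1: "supermartingale \<phi> M1" "\<And>\<omega>. liminf (\<lambda>n. ereal (M1 (prefix_of \<omega> n))) \<ge> ereal (indicator G1 \<omega>)"
    and M2: "supermartingale \<phi> M2" "\<And>\<omega>. liminf (\<lambda>n. ereal (M2 (prefix_of \<omega> n))) \<ge> ereal (indicator G2 \<omega>)"
    for M1 M2
  proof -
    let ?M = "\<lambda>s. M1 s + M2 s"
    have "supermartingale \<phi> ?M" unfolding supermartingale_def UE[OF fsys]
    proof
      fix s
      have "ue (lower_fs \<phi> s) (upper_fs \<phi> s) (\<lambda>x. M1 (s @ [x]) + M2 (s @ [x])) \<le>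
        ue (lower_fs \<phi> s) (upper_fs \<phi> s) (\<lambda>x. M1 (s @ [x])) + ue (lower_fs \<phi> s) (upper_fs \<phi> s) (\<lambda>x. M2 (s @ [x]))"
        by (rule ue_add)
      also have "\<dots> \<le> M1 s + M2 s" using M1(1) M2(1) unfolding supermartingale_def UE[OF fsys]
        by (intro add_mono) auto
      finally show "ue (lower_fs \<phi> s) (upper_fs \<phi> s) (\<lambda>x. M1 (s @ [x]) + M2 (s @ [x])) \<le> M1 s + M2 s" .
    qed
    moreover have "liminf (\<lambda>n. ereal (?M (prefix_of \<omega> n))) \<ge> ereal (indicator G \<omega>)" for \<omega>
    proof -
      let ?u = "\<lambda>n. ereal (M1 (prefix_of \<omega> n))" and ?v = "\<lambda>n. ereal (M2 (prefix_of \<omega> n))"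
      have a: "liminf ?u \<ge> ereal (indicator G1 \<omega>)" "liminf ?v \<ge> ereal (indicator G2 \<omega>)" using M1 M2 by auto
      hence nm: "liminf ?u \<noteq> -\<infinity>" "liminf ?v \<noteq> -\<infinity>" by auto
      have "ereal (indicator G \<omega>) \<le> ereal (indicator G1 \<omega>) + ereal (indicator G2 \<omega>)"
        using sub by (auto simp: indicator_def)
      also have "\<dots> \<le> liminf ?u + liminf ?v" using a by (rule add_mono)
      also have "\<dots> \<le> liminf (\<lambda>n. ?u n + ?v n)" by (rule ereal_liminf_add_mono) (use nm in auto)
      finally show ?thesis by simp
    qed
    ultimately show ?thesis using up_le[OF fsys] by fastforce
  qed
  have "upper_prob \<phi> G - M2 [] \<le> upper_prob \<phi> G1" if M2: "supermartingale \<phi> M2"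
     "\<And>\<omega>. liminf (\<lambda>n. ereal (M2 (prefix_of \<omega> n))) \<ge> ereal (indicator G2 \<omega>)" for M2
    using key[OF _ _ M2] by (intro up_ge[OF fsys]) (simp add: algebra_simps)
  hence "upper_prob \<phi> G - upper_prob \<phi> G1 \<le> upper_prob \<phi> G2"
    by (intro up_ge[OF fsys]) (simp add: algebra_simps)
  thus ?thesis by simp
qed



fun U :: "(bool list \<Rightarrow> real set) \<Rightarrow> bool list set \<Rightarrow> nat \<Rightarrow> bool list \<Rightarrow> real" where
  "U \<phi> An 0 s = 0"
| "U \<phi> An (Suc d) s = (if s \<in> An then 1 else ue (lower_fs \<phi> s) (upper_fs \<phi> s) (\<lambda>x. U \<phi> An d (s @ [x])))"

lemma U_range: assumes "forecasting_system \<phi>" shows "0 \<le> U \<phi> An d s \<and> U \<phi> An d s \<le> 1"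
proof (induction d arbitrary: s)
  case 0 thus ?case by simp
next
  case (Suc d)
  have "ue (lower_fs \<phi> s) (upper_fs \<phi> s) (\<lambda>_. 0) \<le> ue (lower_fs \<phi> s) (upper_fs \<phi> s) (\<lambda>x. U \<phi> An d (s @ [x]))"
    "ue (lower_fs \<phi> s) (upper_fs \<phi> s) (\<lambda>x. U \<phi> An d (s @ [x])) \<le> ue (lower_fs \<phi> s) (upper_fs \<phi> s) (\<lambda>_. 1)"
    using fs[OF assms, of s] Suc by (intro ue_mono; auto)+
  thus ?case by (simp add: ue_const)
qed

lemma len_prefix[simp]: "length (prefix_of \<omega> n) = n" by (simp add: prefix_of_def)
lemma take_prefix: "k \<le> n \<Longrightarrow> take k (prefix_of \<omega> n) = prefix_of \<omega> k"
  by (simp add: prefix_of_def take_map min_def)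

lemma mem_cyl_set: "\<omega> \<in> cyl_set S \<longleftrightarrow> (\<exists>t\<in>S. prefix_of \<omega> (length t) = t)"
  by (auto simp: cyl_set_def cyl_def)

lemma U_lower:
  assumes fsys: "forecasting_system \<phi>" and sm: "supermartingale \<phi> M"
    and lim: "\<And>\<omega>. liminf (\<lambda>n. ereal (M (prefix_of \<omega> n))) \<ge> ereal (indicator (cyl_set {s\<in>An. length s < l}) \<omega>)"
  shows "length s + d = l \<Longrightarrow> U \<phi> An d s \<le> M s"
proof (induction d arbitrary: s)
  case 0
  have "0 \<le> M s"
  proof (rule sm_lower[OF fsys sm])
    fix \<omega> show "ereal 0 \<le> liminf (\<lambda>n. ereal (M (prefix_of \<omega> n)))"
      by (rule order.trans[rotated, OF lim[of \<omega>]]) (simp add: indicator_def)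
  qed
  thus ?case by simp
next
  case (Suc d)
  show ?case
  proof (cases "s \<in> An")
    case True
    have "1 \<le> M s"
    proof (rule sm_lower[OF fsys sm])
      fix \<omega> assume "prefix_of \<omega> (length s) = s"
      hence "\<omega> \<in> cyl_set {s\<in>An. length s < l}" using True Suc.prems unfolding mem_cyl_set by auto
      thus "ereal 1 \<le> liminf (\<lambda>n. ereal (M (prefix_of \<omega> n)))"
        using lim[of \<omega>] by simp
    qed
    thus ?thesis using True by simp
  next
    case False
    have "ue (lower_fs \<phi> s) (upper_fs \<phi> s) (\<lambda>x. U \<phi> An d (s @ [x])) \<le> ue (lower_fs \<phi> s) (upper_fs \<phi> s) (\<lambda>x. M (s @ [x]))"
      using fs[OF fsys, of s] Suc by (intro ue_mono) auto
    also have "\<dots> \<le> M s" using sm unfolding supermartingale_def UE[OF fsys] by auto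
    finally show ?thesis using False by simp
  qed
qed

lemma U_upper:
  assumes fsys: "forecasting_system \<phi>"
  shows "upper_prob \<phi> (cyl_set {s\<in>An. length s < l}) \<le> U \<phi> An l []"
proof -
  define S where "S = {s\<in>An. length s < l}"
  define P where "P s \<longleftrightarrow> (\<exists>k\<le>length s. take k s \<in> S)" for s
  define M where "M s = (if P s then 1 else if length s \<ge> l then 0 else U \<phi> An (l - length s) s)" for s
  have Papp: "P s \<Longrightarrow> P (s @ [x])" for s x unfolding P_def
  proof (elim exE conjE)
    fix k assume "k \<le> length s" "take k s \<in> S"
    thus "\<exists>k\<le>length (s @ [x]). take k (s @ [x]) \<in> S" by (intro exI[of _ k]) auto
  qed
  have Papp2: "P (s @ [x]) \<Longrightarrow> \<not> P s \<Longrightarrow> s @ [x] \<in> S" for s x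
    unfolding P_def by (auto simp: take_append le_Suc_eq)
  have "supermartingale \<phi> M" unfolding supermartingale_def UE[OF fsys]
  proof
    fix s
    let ?lo = "lower_fs \<phi> s" and ?hi = "upper_fs \<phi> s"
    show "ue ?lo ?hi (\<lambda>x. M (s @ [x])) \<le> M s"
    proof (cases "P s")
      case True
      hence "(\<lambda>x. M (s @ [x])) = (\<lambda>_. 1)" using Papp by (auto simp: M_def)
      thus ?thesis using True by (simp add: ue_const M_def)
    next
      case nP: False
      show ?thesis
      proof (cases "length s \<ge> l")
        case True
        have "\<not> P (s @ [x])" for x using Papp2[of s x] nP True by (auto simp: S_def)
        hence "(\<lambda>x. M (s @ [x])) = (\<lambda>_. 0)" using True by (auto simp: M_def)
        thus ?thesis using True nP by (simp add: ue_const M_def)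
      next
        case False
        then obtain d where d: "l - length s = Suc d" by (metis Suc_diff_Suc not_le)
        have sA: "s \<notin> An" using nP False unfolding P_def S_def by (metis (mono_tags, lifting) le_refl mem_Collect_eq not_le take_all)
        have ch: "M (s @ [x]) = U \<phi> An d (s @ [x])" for x
        proof (cases "P (s @ [x])")
          case True
          hence "s @ [x] \<in> S" using Papp2 nP by blast
          hence "s @ [x] \<in> An" "d \<noteq> 0" using d by (auto simp: S_def)
          then obtain d' where "d = Suc d'" using not0_implies_Suc by blast
          thus ?thesis using True \<open>s @ [x] \<in> An\<close> by (simp add: M_def)
        next
          case False
          have dd: "d = l - Suc (length s)" using d by simp
          show ?thesis using False dd by (cases "l \<le> Suc (length s)") (auto simp: M_def)
        qed
        have "M s = U \<phi> An (Suc d) s" using nP False d by (simp add: M_def)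
        thus ?thesis using sA ch by simp
      qed
    qed
  qed
  moreover have "liminf (\<lambda>n. ereal (M (prefix_of \<omega> n))) \<ge> ereal (indicator (cyl_set S) \<omega>)" for \<omega>
  proof (cases "\<omega> \<in> cyl_set S")
    case True
    then obtain t where t: "t \<in> S" "prefix_of \<omega> (length t) = t" unfolding mem_cyl_set by blast
    have "liminf (\<lambda>n. ereal (M (prefix_of \<omega> n))) = ereal 1"
    proof (rule liminf_ev_eq[where m="length t"])
      fix n assume "length t \<le> n"
      hence "P (prefix_of \<omega> n)" unfolding P_def using t take_prefix by (intro exI[of _ "length t"]) auto
      thus "M (prefix_of \<omega> n) = 1" by (simp add: M_def)
    qed
    thus ?thesis using True by simp
  next
    case False
    have "liminf (\<lambda>n. ereal (M (prefix_of \<omega> n))) = ereal 0"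
    proof (rule liminf_ev_eq[where m=l])
      fix n assume n: "l \<le> n"
      have "\<not> P (prefix_of \<omega> n)"
      proof
        assume "P (prefix_of \<omega> n)"
        then obtain k where "k \<le> n" "take k (prefix_of \<omega> n) \<in> S" unfolding P_def by auto
        hence "prefix_of \<omega> k \<in> S" using take_prefix by metis
        hence "\<omega> \<in> cyl_set S" unfolding mem_cyl_set by (intro bexI[of _ "prefix_of \<omega> k"]) auto
        thus False using False by simp
      qed
      thus "M (prefix_of \<omega> n) = 0" using n by (simp add: M_def)
    qed
    thus ?thesis using False by simp
  qed
  ultimately have "upper_prob \<phi> (cyl_set S) \<le> M []" by (rule up_le[OF fsys])
  also have "M [] = U \<phi> An l []"
  proof (cases l)
    case 0 thus ?thesis by (simp add: M_def P_def S_def)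
  next
    case (Suc l')
    show ?thesis
    proof (cases "[] \<in> An")
      case True thus ?thesis using Suc by (simp add: M_def P_def S_def)
    next
      case False thus ?thesis using Suc by (simp add: M_def P_def S_def)
    qed
  qed
  finally show ?thesis unfolding S_def .
qed

lemma U_eq: assumes fsys: "forecasting_system \<phi>"
  shows "upper_prob \<phi> (cyl_set {s\<in>An. length s < l}) = U \<phi> An l []"
proof (rule antisym[OF U_upper[OF fsys] up_ge[OF fsys]])
  fix M assume "supermartingale \<phi> M" "\<And>\<omega>. liminf (\<lambda>n. ereal (M (prefix_of \<omega> n))) \<ge> ereal (indicator (cyl_set {s\<in>An. length s < l}) \<omega>)"
  from U_lower[OF fsys this, of "[]" l] show "U \<phi> An l [] \<le> M []" by simp
qed



definition revstep :: "nat \<Rightarrow> nat" where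
  "revstep z = (if p2 z = 0 then z else pe (Suc (pe (p1 (p2 z - 1)) (p1 z))) (p2 (p2 z - 1)))"
definition revc :: "nat \<Rightarrow> nat" where "revc r = p1 ((revstep ^^ r) (pe 0 r))"

lemma le_length_encode: "length xs \<le> list_encode xs"
proof (induction xs)
  case (Cons x xs)
  thus ?case using le_prod_encode_2[where a=x and b="list_encode xs"] by simp
qed simp

lemma revstep_iter: "(revstep ^^ k) (pe (list_encode acc) (list_encode xs)) =
   pe (list_encode (rev (take k xs) @ acc)) (list_encode (drop k xs))"
proof (induction k arbitrary: acc xs)
  case 0 thus ?case by simp
next
  case (Suc k)
  show ?case
  proof (cases xs)
    case Nil
    have "(revstep ^^ k) (pe (list_encode acc) 0) = pe (list_encode acc) 0" for k
      by (induction k) (auto simp: revstep_def)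
    from this[of "Suc k"] show ?thesis using Nil by simp
  next
    case (Cons y ys)
    have "revstep (pe (list_encode acc) (list_encode xs)) = pe (list_encode (y # acc)) (list_encode ys)"
      using Cons by (simp add: revstep_def)
    thus ?thesis using Suc[of "y # acc" ys] Cons by (simp del: funpow.simps add: funpow_Suc_right)
  qed
qed

lemma revc: "revc (list_encode xs) = list_encode (rev xs)"
  using revstep_iter[of "list_encode xs" "[]" xs] le_length_encode[of xs]
  unfolding revc_def by simp

definition clampc :: "nat \<Rightarrow> nat \<Rightarrow> nat \<Rightarrow> nat" where
  "clampc a b c = (if (a - b) - c = 0 then pe (a - b) c else pe 1 0)"
definition val :: "nat \<Rightarrow> real" where "val z = real (p1 z) / real (p2 z + 1)"
definition okc :: "nat \<Rightarrow> bool" where "okc z \<longleftrightarrow> p1 z \<le> p2 z + 1"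
definition linc :: "nat \<Rightarrow> nat \<Rightarrow> nat \<Rightarrow> nat" where
  "linc a u v = pe (p1 a * p1 u * (p2 v + 1) + (p2 a + 1 - p1 a) * p1 v * (p2 u + 1))
      ((p2 a + 1) * (p2 u + 1) * (p2 v + 1) - 1)"
definition maxc :: "nat \<Rightarrow> nat \<Rightarrow> nat" where
  "maxc u w = (if p1 u * (p2 w + 1) - p1 w * (p2 u + 1) = 0 then w else u)"
definition combc :: "nat \<Rightarrow> nat \<Rightarrow> nat \<Rightarrow> nat \<Rightarrow> nat" where
  "combc lo hi u v = maxc (linc lo u v) (linc hi u v)"

lemma val_nonneg: "0 \<le> val z" by (simp add: val_def)
lemma okc_val: "okc z \<longleftrightarrow> val z \<le> 1"
proof -
  have "val z \<le> 1 \<longleftrightarrow> real (p1 z) \<le> real (p2 z + 1)"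
    unfolding val_def by (simp only: divide_le_eq_1) auto
  also have "\<dots> \<longleftrightarrow> okc z" unfolding okc_def of_nat_le_iff ..
  finally show ?thesis ..
qed

lemma clampc: assumes "0 \<le> p" "p \<le> 1"
  shows "okc (clampc a b c)" "\<bar>val (clampc a b c) - p\<bar> \<le> \<bar>(real a - real b) / (real c + 1) - p\<bar>"
proof -
  show "okc (clampc a b c)" by (auto simp: clampc_def okc_def)
  show "\<bar>val (clampc a b c) - p\<bar> \<le> \<bar>(real a - real b) / (real c + 1) - p\<bar>"
  proof (cases "a \<le> b")
    case True
    hence "(real a - real b) / (real c + 1) \<le> 0" by (simp add: divide_nonpos_pos)
    thus ?thesis using True assms by (simp add: clampc_def val_def)
  next
    case nab: False
    show ?thesis
    proof (cases "a - b \<le> c")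
      case True
      thus ?thesis using nab by (simp add: clampc_def val_def of_nat_diff add.commute)
    next
      case False
      hence q1: "1 \<le> (real a - real b) / (real c + 1)" using nab by (simp add: le_divide_eq)
      have "val (clampc a b c) = 1" using False by (simp add: clampc_def val_def)
      thus ?thesis using q1 assms abs_ge_self[of "(real a - real b) / (real c + 1) - p"] by linarith
    qed
  qed
qed

lemma frac_lin: fixes A A' U U' V V' :: real assumes "A' > 0" "U' > 0" "V' > 0"
  shows "(A*U*V' + (A'-A)*V*U')/(A'*U'*V') = A/A' * (U/U') + (1 - A/A') * (V/V')"
  using assms by (simp add: field_simps)

lemma frac_le: fixes A A' B B' :: real assumes "A' > 0" "B' > 0"
  shows "A/A' \<le> B/B' \<longleftrightarrow> A*B' \<le> B*A'"
  using assms by (simp add: field_simps)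

lemma val_linc: assumes "okc a"
  shows "val (linc a u v) = val a * val u + (1 - val a) * val v"
proof -
  have pos: "(p2 a + 1) * (p2 u + 1) * (p2 v + 1) - 1 + 1 = (p2 a + 1) * (p2 u + 1) * (p2 v + 1)" by simp
  have sub: "real (p2 a + 1 - p1 a) = real (p2 a) + 1 - real (p1 a)" using assms unfolding okc_def
    by (simp add: of_nat_diff)
  show ?thesis unfolding linc_def val_def p12_pe pos of_nat_add of_nat_mult sub
    using frac_lin[of "real (p2 a) + 1" "real (p2 u) + 1" "real (p2 v) + 1" "real (p1 a)" "real (p1 u)" "real (p1 v)"]
    by (simp add: algebra_simps)
qed

lemma val_maxc: "val (maxc u w) = max (val u) (val w)"
proof -
  have "(p1 u * (p2 w + 1) - p1 w * (p2 u + 1) = 0) \<longleftrightarrow> p1 u * (p2 w + 1) \<le> p1 w * (p2 u + 1)"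
    by simp
  also have "\<dots> \<longleftrightarrow> real (p1 u * (p2 w + 1)) \<le> real (p1 w * (p2 u + 1))"
    by (simp only: of_nat_le_iff)
  also have "\<dots> \<longleftrightarrow> val u \<le> val w" unfolding val_def
    by (subst frac_le) (auto simp: algebra_simps)
  finally have "(p1 u * (p2 w + 1) - p1 w * (p2 u + 1) = 0) \<longleftrightarrow> val u \<le> val w" .
  thus ?thesis by (simp add: maxc_def max_def)
qed

lemma okc_maxc: "okc u \<Longrightarrow> okc w \<Longrightarrow> okc (maxc u w)" by (simp add: maxc_def)

lemma okc_linc: assumes "okc a" "okc u" "okc v" shows "okc (linc a u v)"
proof -
  have "val a * val u + (1 - val a) * val v \<le> val a * 1 + (1 - val a) * 1"
    using assms by (intro add_mono mult_left_mono) (auto simp: okc_val val_nonneg)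
  thus ?thesis using assms by (simp add: okc_val val_linc)
qed

lemma lin_err:
  fixes a a' u u' v v' e d :: real
  assumes "0 \<le> a'" "a' \<le> 1" "\<bar>a' - a\<bar> \<le> d" "0 \<le> u" "u \<le> 1" "0 \<le> v" "v \<le> 1"
    "\<bar>u' - u\<bar> \<le> e" "\<bar>v' - v\<bar> \<le> e"
  shows "\<bar>(a' * u' + (1 - a') * v') - (a * u + (1 - a) * v)\<bar> \<le> e + d"
proof -
  have eq: "(a' * u' + (1 - a') * v') - (a * u + (1 - a) * v) = a' * (u' - u) + (1 - a') * (v' - v) + (a' - a) * (u - v)"
    by (simp add: algebra_simps)
  have "\<bar>a' * (u' - u)\<bar> \<le> a' * e" using assms by (simp add: abs_mult mult_left_mono)
  moreover have "\<bar>(1 - a') * (v' - v)\<bar> \<le> (1 - a') * e" using assms by (simp add: abs_mult mult_left_mono)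
  moreover have "\<bar>(a' - a) * (u - v)\<bar> \<le> d * 1"
    unfolding abs_mult by (rule mult_mono) (use assms in auto)
  ultimately show ?thesis unfolding eq by (simp add: algebra_simps)
qed

lemma max_err: fixes x1 x2 y1 y2 E :: real
  shows "\<bar>x1 - y1\<bar> \<le> E \<Longrightarrow> \<bar>x2 - y2\<bar> \<le> E \<Longrightarrow> \<bar>max x1 x2 - max y1 y2\<bar> \<le> E"
  by (auto simp: max_def abs_le_iff)



lemma funpow3: "(f ^^ (a + b + 2)) x = f ((f ^^ b) ((f ^^ a) (f x)))"
proof -
  have "a + b + 2 = Suc (b + Suc a)" by simp
  thus ?thesis by (simp only: funpow.simps(2) funpow_add funpow_Suc_right comp_def funpow_swap1)
qed

context
  fixes fA aL bL cL aU bU cU :: "nat \<Rightarrow> nat"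
begin

definition loc :: "nat \<Rightarrow> nat \<Rightarrow> nat" where "loc K sc = clampc (aL (pe sc K)) (bL (pe sc K)) (cL (pe sc K))"
definition hic :: "nat \<Rightarrow> nat \<Rightarrow> nat" where "hic K sc = clampc (aU (pe sc K)) (bU (pe sc K)) (cU (pe sc K))"

definition stepc :: "nat \<Rightarrow> nat \<Rightarrow> nat \<Rightarrow> nat" where
 "stepc n K z = (if p1 z = 0 then z else
    let T = p1 z - 1; V = p2 z; t = p1 T; ts = p2 T; d = p1 (p2 t); r = p2 (p2 t) in
    if p1 t = 0 then
      (if d = 0 then pe ts (Suc (pe (pe 0 0) V))
       else if fA (pe n (revc r)) = 0 then
         pe (Suc (pe (pe 0 (pe (d - 1) (Suc (pe 1 r)))) (Suc (pe (pe 0 (pe (d - 1) (Suc (pe 0 r))))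
             (Suc (pe (pe 1 (pe d r)) ts)))))) V
       else pe ts (Suc (pe (pe 1 0) V)))
    else pe ts (Suc (pe (combc (loc K (revc r)) (hic K (revc r)) (p1 (p2 (V - 1) - 1)) (p1 (V - 1)))
         (p2 (p2 (V - 1) - 1)))))"

fun Wc :: "nat \<Rightarrow> nat \<Rightarrow> nat \<Rightarrow> bool list \<Rightarrow> nat" where
  "Wc n K 0 s = pe 0 0"
| "Wc n K (Suc d) s = (if fA (pe n (enc_str s)) = 0 then combc (loc K (enc_str s)) (hic K (enc_str s))
      (Wc n K d (s @ [True])) (Wc n K d (s @ [False])) else pe 1 0)"

fun cnt :: "nat \<Rightarrow> nat \<Rightarrow> bool list \<Rightarrow> nat" where
  "cnt n 0 s = 1"
| "cnt n (Suc d) s = (if fA (pe n (enc_str s)) = 0 then cnt n d (s @ [True]) + cnt n d (s @ [False]) + 2 else 1)"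

definition tcode :: "nat \<Rightarrow> nat \<Rightarrow> bool list \<Rightarrow> nat" where
  "tcode tag d s = pe tag (pe d (list_encode (map of_bool (rev s))))"

lemma revc_tcode: "revc (list_encode (map of_bool (rev s))) = enc_str s"
  by (simp add: revc enc_str_def rev_map)

lemma run: "(stepc n K ^^ cnt n d s) (pe (Suc (pe (tcode 0 d s) ts)) V) = pe ts (Suc (pe (Wc n K d s) V))"
proof (induction d arbitrary: s ts V)
  case 0 show ?case by (simp add: stepc_def tcode_def)
next
  case (Suc d)
  show ?case
  proof (cases "fA (pe n (enc_str s)) = 0")
    case False thus ?thesis by (simp add: stepc_def tcode_def revc_tcode Let_def)
  next
    case True
    let ?f = "stepc n K"
    have s1: "?f (pe (Suc (pe (tcode 0 (Suc d) s) ts)) V) = pe (Suc (pe (tcode 0 d (s@[True]))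
       (Suc (pe (tcode 0 d (s@[False])) (Suc (pe (tcode 1 (Suc d) s) ts)))))) V"
      using True by (simp add: stepc_def tcode_def revc_tcode Let_def)
    have s4: "?f (pe (Suc (pe (tcode 1 (Suc d) s) ts)) (Suc (pe (Wc n K d (s @ [False])) (Suc (pe (Wc n K d (s @ [True])) V)))))
       = pe ts (Suc (pe (Wc n K (Suc d) s) V))"
      using True by (simp add: stepc_def tcode_def revc_tcode Let_def)
    have ce: "cnt n (Suc d) s = cnt n d (s @ [True]) + cnt n d (s @ [False]) + 2" using True by simp
    show ?thesis unfolding ce funpow3 s1 Suc.IH s4 ..
  qed
qed

lemma idle: "(stepc n K ^^ k) (pe 0 V) = pe 0 V"
  by (induction k) (auto simp: stepc_def)

lemma cnt_bound: "cnt n d s + 2 \<le> 2 ^ (d + 2)"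
proof (induction d arbitrary: s)
  case 0 thus ?case by simp
next
  case (Suc d)
  have "cnt n d (s @ [True]) + cnt n d (s @ [False]) + 2 + 2 \<le> 2 ^ (d + 2) + 2 ^ (d + 2)"
    using Suc[of "s @ [True]"] Suc[of "s @ [False]"] by simp
  thus ?case by auto
qed

lemma run_all: assumes "cnt n d [] \<le> k"
  shows "(stepc n K ^^ k) (pe (Suc (pe (pe 0 (pe d 0)) 0)) 0) = pe 0 (Suc (pe (Wc n K d []) 0))"
proof -
  have k: "k = (k - cnt n d []) + cnt n d []" using assms by simp
  have "tcode 0 d [] = pe 0 (pe d 0)" by (simp add: tcode_def)
  thus ?thesis using run[where n=n and K=K and d=d and s="[]" and ts=0 and V=0] idle
    by (subst k, simp only: funpow_add comp_def)
qed

lemma Wc_err: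
  assumes fsys: "forecasting_system \<phi>"
    and hA: "\<And>s. fA (pe n (enc_str s)) \<noteq> 0 \<longleftrightarrow> s \<in> An"
    and lo: "\<And>s. okc (loc K (enc_str s)) \<and> \<bar>val (loc K (enc_str s)) - lower_fs \<phi> s\<bar> \<le> \<delta>"
    and hi: "\<And>s. okc (hic K (enc_str s)) \<and> \<bar>val (hic K (enc_str s)) - upper_fs \<phi> s\<bar> \<le> \<delta>"
  shows "okc (Wc n K d s) \<and> \<bar>val (Wc n K d s) - U \<phi> An d s\<bar> \<le> d * \<delta>"
proof (induction d arbitrary: s)
  case 0 thus ?case by (simp add: okc_def val_def)
next
  case (Suc d)
  show ?case
  proof (cases "fA (pe n (enc_str s)) = 0")
    case False
    have d0: "0 \<le> \<delta>" using lo[of "[]"] by (meson abs_ge_zero order_trans)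
    thus ?thesis using False hA[of s] by (simp add: okc_def val_def)
  next
    case True
    hence sA: "s \<notin> An" using hA by blast
    let ?lo = "loc K (enc_str s)" and ?hi = "hic K (enc_str s)"
    let ?WT = "Wc n K d (s @ [True])" and ?WF = "Wc n K d (s @ [False])"
    let ?UT = "U \<phi> An d (s @ [True])" and ?UF = "U \<phi> An d (s @ [False])"
    have okT: "okc ?WT" "okc ?WF" using Suc by auto
    have eT: "\<bar>val ?WT - ?UT\<bar> \<le> d * \<delta>" "\<bar>val ?WF - ?UF\<bar> \<le> d * \<delta>" using Suc by auto
    have Ur: "0 \<le> ?UT" "?UT \<le> 1" "0 \<le> ?UF" "?UF \<le> 1" using U_range[OF fsys] by auto
    have l1: "\<bar>val (linc ?lo ?WT ?WF) - (lower_fs \<phi> s * ?UT + (1 - lower_fs \<phi> s) * ?UF)\<bar> \<le> d * \<delta> + \<delta>"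
      unfolding val_linc[OF lo[THEN conjunct1]]
      by (rule lin_err) (use lo[of s] val_nonneg[of ?lo] okc_val[of ?lo] Ur eT in auto)
    have l2: "\<bar>val (linc ?hi ?WT ?WF) - (upper_fs \<phi> s * ?UT + (1 - upper_fs \<phi> s) * ?UF)\<bar> \<le> d * \<delta> + \<delta>"
      unfolding val_linc[OF hi[THEN conjunct1]]
      by (rule lin_err) (use hi[of s] val_nonneg[of ?hi] okc_val[of ?hi] Ur eT in auto)
    have "okc (Wc n K (Suc d) s)" using True lo hi okT
      by (simp add: combc_def okc_maxc okc_linc)
    moreover have "\<bar>val (Wc n K (Suc d) s) - U \<phi> An (Suc d) s\<bar> \<le> Suc d * \<delta>"
      using True sA max_err[OF l1 l2] by (simp add: combc_def val_maxc ue_def algebra_simps)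
    ultimately show ?thesis by simp
  qed
qed

end



lemma rc1_revc[intro]: "rc1 F \<Longrightarrow> rc1 (\<lambda>x. revc (F x))"
proof -
  have "rc1 revstep" unfolding revstep_def by (intro rc1_if rc1_pe rc1_p1' rc1_p2' rc1_id rc1_Suc rc1_sub rc1_const)
  hence "rc1 revc" unfolding revc_def by (intro rc1_p1' rc1_iter0 rc1_pe rc1_const rc1_id)
  thus "rc1 F \<Longrightarrow> rc1 (\<lambda>x. revc (F x))" by (rule rc1_comp)
qed

lemma rc1_clampc[intro]: "rc1 A \<Longrightarrow> rc1 B \<Longrightarrow> rc1 C \<Longrightarrow> rc1 (\<lambda>x. clampc (A x) (B x) (C x))"
  unfolding clampc_def by (intro rc1_if rc1_pe rc1_sub rc1_const) auto

lemma rc1_combc[intro]: "rc1 A \<Longrightarrow> rc1 B \<Longrightarrow> rc1 C \<Longrightarrow> rc1 D \<Longrightarrow> rc1 (\<lambda>x. combc (A x) (B x) (C x) (D x))"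
  unfolding combc_def maxc_def linc_def
  by (intro rc1_if rc1_pe rc1_sub rc1_const rc1_add rc1_mult rc1_p1' rc1_p2') auto

lemma rc1_pow2[intro]: "rc1 F \<Longrightarrow> rc1 (\<lambda>x. 2 ^ F x)"
proof -
  have e: "((\<lambda>z. z + z) ^^ k) 1 = (2::nat) ^ k" for k by (induction k) auto
  assume "rc1 F"
  hence "rc1 (\<lambda>x. ((\<lambda>z. z + z) ^^ F x) 1)" by (intro rc1_iter0 rc1_add rc1_id rc1_const)
  thus ?thesis unfolding e .
qed

lemma rc1_stepc:
  assumes "rc1 fA" "rc1 aL" "rc1 bL" "rc1 cL" "rc1 aU" "rc1 bU" "rc1 cU" "rc1 Nf" "rc1 Kf"
  shows "rc1 (\<lambda>p. stepc fA aL bL cL aU bU cU (Nf (p1 p)) (Kf (p1 p)) (p2 p))"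
  unfolding stepc_def Let_def loc_def hic_def
  by (intro rc1_if rc1_pe rc1_sub rc1_const rc1_id rc1_Suc rc1_p1' rc1_p2' rc1_revc rc1_combc rc1_clampc
      rc1_comp[OF assms(1)] rc1_comp[OF assms(2)] rc1_comp[OF assms(3)] rc1_comp[OF assms(4)]
      rc1_comp[OF assms(5)] rc1_comp[OF assms(6)] rc1_comp[OF assms(7)] rc1_comp[OF assms(8)]
      rc1_comp[OF assms(9)])

lemma l_half: "real l * (1/2::real) ^ (Suc N + l) \<le> (1/2) ^ Suc N"
proof -
  have "real l \<le> 2 ^ l" using less_exp[of l] by (metis less_imp_le of_nat_le_iff of_nat_numeral of_nat_power)
  hence "real l * (1/2::real) ^ l \<le> 1" by (simp add: power_one_over field_simps)
  hence "real l * (1/2::real) ^ l * (1/2) ^ Suc N \<le> 1 * (1/2) ^ Suc N" by (intro mult_right_mono) auto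
  thus ?thesis by (simp add: power_add algebra_simps)
qed

theorem proposition5p5:
  fixes \<phi> :: "bool list \<Rightarrow> real set" and A :: "(nat \<times> bool list) set"
  assumes "forecasting_system \<phi>" and "computable_fs \<phi>" and "schnorr_test \<phi> A"
  shows "computable_real (\<lambda>n::nat. n) (\<lambda>n. upper_prob \<phi> (cyl_set (section_of A n)))"
proof -
  note fsys = assms(1)
  obtain qL where qL: "recursive_rat qL" "\<And>d N. \<bar>lower_fs \<phi> d - real_of_rat (qL (pe (enc_str d) N))\<bar> \<le> (1/2)^N"
    using assms(2) unfolding computable_fs_def computable_real_def by blast
  obtain qU where qU: "recursive_rat qU" "\<And>d N. \<bar>upper_fs \<phi> d - real_of_rat (qU (pe (enc_str d) N))\<bar> \<le> (1/2)^N"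
    using assms(2) unfolding computable_fs_def computable_real_def by blast
  obtain aL bL cL where L: "rc1 aL" "rc1 bL" "rc1 cL" "\<And>x. qL x = (of_nat (aL x) - of_nat (bL x)) / of_nat (cL x + 1)"
    using qL(1) unfolding recursive_rat_def by blast
  obtain aU bU cU where U: "rc1 aU" "rc1 bU" "rc1 cU" "\<And>x. qU x = (of_nat (aU x) - of_nat (bU x)) / of_nat (cU x + 1)"
    using qU(1) unfolding recursive_rat_def by blast
  obtain fA where fA: "rc1 fA" "\<And>n s. fA (pe n (enc_str s)) = (if (n, s) \<in> A then 1 else 0)"
    using assms(3) unfolding schnorr_test_def recursive_set_def by blast
  obtain e where e: "recursive2 e" "\<And>N n l. l \<ge> e N n \<Longrightarrow>
      upper_prob \<phi> (cyl_set (section_of A n) - cyl_set (section_lt A n l)) \<le> (1/2)^N"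
    using assms(3) unfolding schnorr_test_def by blast
  obtain fE where fE: "rc1 fE" "\<And>x y. e x y = fE (pe x y)" using e(1) unfolding recursive2_def by blast
  define Lf where "Lf x = fE (pe (Suc (p2 x)) (p1 x))" for x
  define Kf where "Kf x = Suc (p2 x) + Lf x" for x
  define Fr where "Fr x = (stepc fA aL bL cL aU bU cU (p1 x) (Kf x) ^^ (2 ^ (Lf x + 2)))
      (pe (Suc (pe (pe 0 (pe (Lf x) 0)) 0)) 0)" for x
  define Wf where "Wf x = p1 (p2 (Fr x) - 1)" for x
  define q where "q x = (of_nat (p1 (Wf x)) - of_nat ((\<lambda>_. 0) x)) / (of_nat (p2 (Wf x) + 1) :: rat)" for x
  have rLf: "rc1 Lf" unfolding Lf_def by (intro rc1_comp[OF fE(1)] rc1_pe rc1_Suc rc1_p1' rc1_p2' rc1_id)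
  have rKf: "rc1 Kf" unfolding Kf_def by (intro rc1_add rc1_Suc rc1_p2' rc1_id rLf)
  have rWf: "rc1 Wf" unfolding Wf_def Fr_def
    by (intro rc1_p1' rc1_sub rc1_p2' rc1_iter rc1_stepc fA(1) L(1-3) U(1-3) rKf rLf rc1_p1' rc1_id rc1_pow2
        rc1_add rc1_const rc1_pe rc1_Suc)
  have rq: "recursive_rat q" unfolding recursive_rat_def
    by (rule exI[of _ "\<lambda>x. p1 (Wf x)"], rule exI[of _ "\<lambda>_. 0"], rule exI[of _ "\<lambda>x. p2 (Wf x)"])
       (use rWf in \<open>auto simp: q_def\<close>)
  have approx: "\<bar>upper_prob \<phi> (cyl_set (section_of A n)) - real_of_rat (q (pe n N))\<bar> \<le> (1/2)^N" for n N
  proof -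
    define l where "l = Lf (pe n N)"
    define K where "K = Kf (pe n N)"
    have lK: "K = Suc N + l" unfolding K_def l_def Kf_def by simp
    have le: "l = e (Suc N) n" unfolding l_def Lf_def fE(2) by simp
    have "cnt fA n l [] \<le> 2 ^ (l + 2)" using cnt_bound[of fA n l "[]"] by simp
    hence "Fr (pe n N) = pe 0 (Suc (pe (Wc fA aL bL cL aU bU cU n K l []) 0))"
      unfolding Fr_def l_def[symmetric] K_def[symmetric] p12_pe by (rule run_all)
    hence W: "Wf (pe n N) = Wc fA aL bL cL aU bU cU n K l []" by (simp add: Wf_def)
    have qv: "real_of_rat (q (pe n N)) = val (Wc fA aL bL cL aU bU cU n K l [])"
      unfolding q_def W val_def by (simp add: of_rat_divide of_rat_diff of_rat_add)
    have hA: "fA (pe n (enc_str s)) \<noteq> 0 \<longleftrightarrow> s \<in> section_of A n" for s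
      by (simp add: fA(2) section_of_def)
    have lo: "okc (loc aL bL cL K (enc_str s)) \<and> \<bar>val (loc aL bL cL K (enc_str s)) - lower_fs \<phi> s\<bar> \<le> (1/2)^K" for s
    proof -
      have p: "0 \<le> lower_fs \<phi> s" "lower_fs \<phi> s \<le> 1" using fs[OF fsys, of s] by auto
      have "real_of_rat (qL (pe (enc_str s) K)) = (real (aL (pe (enc_str s) K)) - real (bL (pe (enc_str s) K))) / (real (cL (pe (enc_str s) K)) + 1)"
        unfolding L(4) by (simp add: of_rat_divide of_rat_diff of_rat_add)
      thus ?thesis unfolding loc_def using clampc(1)[OF p] qL(2)[of s K]
        order_trans[OF clampc(2)[OF p, of "aL (pe (enc_str s) K)" "bL (pe (enc_str s) K)" "cL (pe (enc_str s) K)"]]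
        by (simp add: abs_minus_commute)
    qed
    have hi: "okc (hic aU bU cU K (enc_str s)) \<and> \<bar>val (hic aU bU cU K (enc_str s)) - upper_fs \<phi> s\<bar> \<le> (1/2)^K" for s
    proof -
      have p: "0 \<le> upper_fs \<phi> s" "upper_fs \<phi> s \<le> 1" using fs[OF fsys, of s] by auto
      have "real_of_rat (qU (pe (enc_str s) K)) = (real (aU (pe (enc_str s) K)) - real (bU (pe (enc_str s) K))) / (real (cU (pe (enc_str s) K)) + 1)"
        unfolding U(4) by (simp add: of_rat_divide of_rat_diff of_rat_add)
      thus ?thesis unfolding hic_def using clampc(1)[OF p] qU(2)[of s K]
        order_trans[OF clampc(2)[OF p, of "aU (pe (enc_str s) K)" "bU (pe (enc_str s) K)" "cU (pe (enc_str s) K)"]]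
        by (simp add: abs_minus_commute)
    qed
    have err: "\<bar>val (Wc fA aL bL cL aU bU cU n K l []) - U \<phi> (section_of A n) l []\<bar> \<le> real l * (1/2)^K"
      using Wc_err[OF fsys hA lo hi] by blast
    have UE': "upper_prob \<phi> (cyl_set (section_lt A n l)) = U \<phi> (section_of A n) l []"
      unfolding section_lt_def by (rule U_eq[OF fsys])
    have sub: "section_lt A n l \<subseteq> section_of A n" by (auto simp: section_lt_def)
    have m1: "upper_prob \<phi> (cyl_set (section_lt A n l)) \<le> upper_prob \<phi> (cyl_set (section_of A n))"
      using sub by (intro up_mono[OF fsys]) (auto simp: cyl_set_def)
    have m2: "upper_prob \<phi> (cyl_set (section_of A n)) \<le>
        upper_prob \<phi> (cyl_set (section_of A n) - cyl_set (section_lt A n l)) + upper_prob \<phi> (cyl_set (section_lt A n l))"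
      by (rule up_subadd[OF fsys]) auto
    have m3: "upper_prob \<phi> (cyl_set (section_of A n) - cyl_set (section_lt A n l)) \<le> (1/2)^Suc N"
      using e(2)[of "Suc N" n l] le by simp
    have m4: "real l * (1/2::real)^K \<le> (1/2)^Suc N" unfolding lK by (rule l_half)
    have "(1/2::real)^N = 2 * (1/2)^Suc N" by simp
    thus ?thesis using qv err UE' m1 m2 m3 m4 by (simp only: abs_le_iff) linarith
  qed
  show ?thesis unfolding computable_real_def using rq approx by blast
qed


end
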